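(* Let $q$ be a prime power and $T\in\mathbb F_q[X,Y,Z]$ a reduced polynomial. Suppose either (1) $T$ satisfies Property (a): $T(a,0,z)=T(0,b,z)=z$ for all $a,b,z\in\mathbb F_q$, together with at least one of Property (c): for all $a,b,c,d\in\mathbb F_q$ with $a\neq c$ there is a unique $x$ with $T(x,a,b)=T(x,c,d)$; or Property (e): for all $a,b,c,d\in\mathbb F_q$ with $a\neq c$ there is a unique pair $(y,z)$ with $T(a,y,z)=b$ and $T(c,y,z)=d$; or (2) $T$ satisfies Property (d): for all $a,b,c\in\mathbb F_q$ there is a unique $z$ with $T(a,b,z)=c$. Then $T(X,Y,Z)$ is a permutation polynomial over $\mathbb F_q$, i.e. for every $d\in\mathbb F_q$ the equation $T(x,y,z)=d$ has exactly $q^2$ solutions $(x,y,z)\in\mathbb F_q^3$.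
   Context: A polynomial is reduced if its degree in each variable is less than $q$. *)

theory Defs
  imports "HOL-Library.Cardinality"
begin

text \<open>The finite field F_q is modelled as a type 'a of class finite and field;
q = CARD('a) (automatically a prime power). A reduced polynomial in
F_q[X,Y,Z] is given by its coefficient array c i j k with 0 \<le> i,j,k < q
(coefficients at other indices are irrelevant/ignored); it is evaluated as below.\<close>

definition red_eval :: "(nat \<Rightarrow> nat \<Rightarrow> nat \<Rightarrow> 'a::{finite,field}) \<Rightarrow> 'a \<Rightarrow> 'a \<Rightarrow> 'a \<Rightarrow> 'a" where
  "red_eval c (x::'a) y z =
     (\<Sum>i<CARD('a). \<Sum>j<CARD('a). \<Sum>k<CARD('a). c i j k * x ^ i * y ^ j * z ^ k)"

definition propA :: "('a::zero \<Rightarrow> 'a \<Rightarrow> 'a \<Rightarrow> 'a) \<Rightarrow> bool" where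
  "propA T \<longleftrightarrow> (\<forall>a b z. T a 0 z = z \<and> T 0 b z = z)"

definition propC :: "('a \<Rightarrow> 'a \<Rightarrow> 'a \<Rightarrow> 'a) \<Rightarrow> bool" where
  "propC T \<longleftrightarrow> (\<forall>a b c d. a \<noteq> c \<longrightarrow> (\<exists>!x. T x a b = T x c d))"

definition propD :: "('a \<Rightarrow> 'a \<Rightarrow> 'a \<Rightarrow> 'a) \<Rightarrow> bool" where
  "propD T \<longleftrightarrow> (\<forall>a b c. \<exists>!z. T a b z = c)"

definition propE :: "('a \<Rightarrow> 'a \<Rightarrow> 'a \<Rightarrow> 'a) \<Rightarrow> bool" where
  "propE T \<longleftrightarrow> (\<forall>a b c d. a \<noteq> c \<longrightarrow>
      (\<exists>!p. T a (fst p) (snd p) = b \<and> T c (fst p) (snd p) = d))"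

definition is_perm_poly3 :: "('a::finite \<Rightarrow> 'a \<Rightarrow> 'a \<Rightarrow> 'a) \<Rightarrow> bool" where
  "is_perm_poly3 (T::'a \<Rightarrow> 'a \<Rightarrow> 'a \<Rightarrow> 'a) \<longleftrightarrow>
     (\<forall>d. card {(x, y, z). T x y z = d} = CARD('a) ^ 2)"

end

theory Submission
  imports Defs
begin

lemma card_split:
  fixes T :: "'a::{finite,zero} \<Rightarrow> 'a \<Rightarrow> 'a \<Rightarrow> 'a"
  assumes "card S0 = CARD('a)" "card S1 = (CARD('a) - 1) * CARD('a)"
    "{(x, y, z). T x y z = e} = S0 \<union> S1" "S0 \<inter> S1 = {}"
  shows "card {(x, y, z). T x y z = e} = CARD('a) ^ 2"
proof -
  have "finite S0" "finite S1" by auto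
  then have "card (S0 \<union> S1) = CARD('a) + (CARD('a) - 1) * CARD('a)"
    using assms card_Un_disjoint by metis
  also have "\<dots> = CARD('a) ^ 2"
    using finite_UNIV_card_ge_0[where 'a='a] by (cases "CARD('a)") (auto simp: power2_eq_square)
  finally show ?thesis using assms(3) by simp
qed

lemma card_nz: "card {y::'a::{finite,zero}. y \<noteq> 0} = CARD('a) - 1"
proof -
  have "{y::'a. y \<noteq> 0} = UNIV - {0}" by auto
  then show ?thesis by (simp add: card_Diff_singleton)
qed

lemma caseC:
  fixes T :: "'a::{finite,zero} \<Rightarrow> 'a \<Rightarrow> 'a \<Rightarrow> 'a"
  assumes A: "\<And>x z. T x 0 z = z" and C: "\<And>c b d. c \<noteq> 0 \<Longrightarrow> \<exists>!x. T x c d = b"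
  shows "card {(x, y, z). T x y z = e} = CARD('a) ^ 2"
proof (rule card_split)
  let ?S0 = "{(x::'a, y::'a, z::'a). y = 0 \<and> z = e}"
  let ?S1 = "{(x::'a, y::'a, z::'a). y \<noteq> 0 \<and> T x y z = e}"
  show "{(x, y, z). T x y z = e} = ?S0 \<union> ?S1" using A by auto
  show "?S0 \<inter> ?S1 = {}" by auto
  have e0: "?S0 = range (\<lambda>x::'a. (x, (0::'a), e))" by auto
  have "card (range (\<lambda>x::'a. (x, (0::'a), e))) = CARD('a)"
    apply (rule card_image) by (auto simp: inj_def)
  then show "card ?S0 = CARD('a)" using e0 by simp
  have inj: "inj_on (\<lambda>(x, y, z). (y, z)) ?S1"
    unfolding inj_on_def by clarsimp (metis C)
  have img: "(\<lambda>(x, y, z). (y, z)) ` ?S1 = {y. y \<noteq> 0} \<times> UNIV"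
  proof -
    have "(y, z) \<in> (\<lambda>(x, y, z). (y, z)) ` ?S1" if ny: "y \<noteq> 0" for y z
    proof -
      obtain x where "T x y z = e" using C[of y z e] ny by blast
      then show ?thesis using ny by (intro image_eqI[of _ _ "(x, y, z)"]) auto
    qed
    then show ?thesis by auto
  qed
  have "card ?S1 = card ({y::'a. y \<noteq> 0} \<times> (UNIV::'a set))"
    using card_image[OF inj] img by simp
  then show "card ?S1 = (CARD('a) - 1) * CARD('a)" by (simp add: card_cartesian_product card_nz)
qed

lemma caseE:
  fixes T :: "'a::{finite,zero} \<Rightarrow> 'a \<Rightarrow> 'a \<Rightarrow> 'a"
  assumes A: "\<And>y z. T 0 y z = z" and C: "\<And>c b d. c \<noteq> 0 \<Longrightarrow> \<exists>!y. T c y d = b"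
  shows "card {(x, y, z). T x y z = e} = CARD('a) ^ 2"
proof (rule card_split)
  let ?S0 = "{(x::'a, y::'a, z::'a). x = 0 \<and> z = e}"
  let ?S1 = "{(x::'a, y::'a, z::'a). x \<noteq> 0 \<and> T x y z = e}"
  show "{(x, y, z). T x y z = e} = ?S0 \<union> ?S1" using A by auto
  show "?S0 \<inter> ?S1 = {}" by auto
  have e0: "?S0 = range (\<lambda>y::'a. ((0::'a), y, e))" by auto
  have "card (range (\<lambda>y::'a. ((0::'a), y, e))) = CARD('a)"
    apply (rule card_image) by (auto simp: inj_def)
  then show "card ?S0 = CARD('a)" using e0 by simp
  have inj: "inj_on (\<lambda>(x, y, z). (x, z)) ?S1"
    unfolding inj_on_def by clarsimp (metis C)
  have img: "(\<lambda>(x, y, z). (x, z)) ` ?S1 = {y. y \<noteq> 0} \<times> UNIV"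
  proof -
    have "(x, z) \<in> (\<lambda>(x, y, z). (x, z)) ` ?S1" if ny: "x \<noteq> 0" for x z
    proof -
      obtain y where "T x y z = e" using C[of x z e] ny by blast
      then show ?thesis using ny by (intro image_eqI[of _ _ "(x, y, z)"]) auto
    qed
    then show ?thesis by auto
  qed
  have "card ?S1 = card ({y::'a. y \<noteq> 0} \<times> (UNIV::'a set))"
    using card_image[OF inj] img by simp
  then show "card ?S1 = (CARD('a) - 1) * CARD('a)" by (simp add: card_cartesian_product card_nz)
qed

lemma caseD:
  fixes T :: "'a::finite \<Rightarrow> 'a \<Rightarrow> 'a \<Rightarrow> 'a"
  assumes D: "\<And>a b. \<exists>!z. T a b z = e"
  shows "card {(x, y, z). T x y z = e} = CARD('a) ^ 2"
proof -
  let ?S = "{(x, y, z). T x y z = e}"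
  have inj: "inj_on (\<lambda>(x, y, z). (x, y)) ?S"
    unfolding inj_on_def using D by auto
  have img: "(\<lambda>(x, y, z). (x, y)) ` ?S = UNIV"
  proof -
    have "(x, y) \<in> (\<lambda>(x, y, z). (x, y)) ` ?S" for x y
    proof -
      obtain z where "T x y z = e" using D[of x y] by blast
      then show ?thesis by (intro image_eqI[of _ _ "(x, y, z)"]) auto
    qed
    then show ?thesis by auto
  qed
  have "card ?S = card (UNIV :: ('a \<times> 'a) set)" using card_image[OF inj] img by simp
  then show ?thesis by (simp add: card_cartesian_product power2_eq_square flip: UNIV_Times_UNIV)
qed

theorem corollary4p5:
  fixes c :: "nat \<Rightarrow> nat \<Rightarrow> nat \<Rightarrow> 'a::{finite,field}"
  assumes "(propA (red_eval c) \<and> (propC (red_eval c) \<or> propE (red_eval c)))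
           \<or> propD (red_eval c)"
  shows "is_perm_poly3 (red_eval c)"
  unfolding is_perm_poly3_def
proof
  fix e
  define T where "T = red_eval c"
  have "card {(x, y, z). T x y z = e} = CARD('a) ^ 2"
  proof -
    { assume A: "propA T" and C: "propC T"
      have A1: "\<And>x z. T x 0 z = z" using A by (simp add: propA_def)
      have "\<And>c b d. c \<noteq> 0 \<Longrightarrow> \<exists>!x. T x c d = b"
      proof -
        fix c' b d :: 'a assume "c' \<noteq> 0"
        then have "\<exists>!x. T x 0 b = T x c' d" using C unfolding propC_def by metis
        then show "\<exists>!x. T x c' d = b" using A1 by (metis)
      qed
      then have ?thesis using caseC[of T, OF A1] by blast }
    moreover
    { assume A: "propA T" and E: "propE T"
      have A1: "\<And>y z. T 0 y z = z" using A by (simp add: propA_def)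
      have "\<And>c b d. c \<noteq> 0 \<Longrightarrow> \<exists>!y. T c y d = b"
      proof -
        fix c' b d :: 'a assume "c' \<noteq> 0"
        then have u: "\<exists>!p. T c' (fst p) (snd p) = b \<and> T 0 (fst p) (snd p) = d"
          using E unfolding propE_def by metis
        then obtain p where p: "T c' (fst p) (snd p) = b \<and> T 0 (fst p) (snd p) = d" by blast
        have "snd p = d" using p A1 by simp
        show "\<exists>!y. T c' y d = b"
        proof (rule ex1I[of _ "fst p"])
          show "T c' (fst p) d = b" using p \<open>snd p = d\<close> by simp
          fix y assume "T c' y d = b"
          then have "T c' (fst (y, d)) (snd (y, d)) = b \<and> T 0 (fst (y, d)) (snd (y, d)) = d"
            using A1 by simp
          then have "(y, d) = p" using u p by blast
          then show "y = fst p" by auto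
        qed
      qed
      then have ?thesis using caseE[of T, OF A1] by blast }
    moreover
    { assume "propD T"
      then have ?thesis using caseD[of T e] unfolding propD_def by blast }
    ultimately show ?thesis using assms unfolding T_def by blast
  qed
  then show "card {(x, y, z). red_eval c x y z = e} = CARD('a) ^ 2" unfolding T_def .
qed

end
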